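(* Let $k\ge2$ and let $\mathcal{M}_1,\dots,\mathcal{M}_k$ be matroids on a finite ground set $E$; let $T$ be independent in all of them, let $p\in(0,1)$, let $\Psi(e)$, $e\in T$, be i.i.d. with $\Pr[\Psi(e)=1]=1-p$, and let $S=\{e\in T:\Psi(e)=1\}$. Let $i\in[k]$, let $\tilde E\subseteq\mathrm{span}_i(T)$, and let $\tilde I\subseteq\tilde E$ be independent in $\mathcal{M}_i$ and in $\mathcal{M}_j/T$ for every $j\ne i$. Then for any fixed arrival order of the elements of $\tilde E$, $$\mathbb{E}_\Psi\left[\left|\mathrm{Greedy}(\mathcal{M}_1/T,\dots,\mathcal{M}_{i-1}/T,\mathcal{M}_i/S,\mathcal{M}_{i+1}/T,\dots,\mathcal{M}_k/T,\ \tilde E)\right|\right]\ge\frac{p}{1+p(k-1)}|\tilde I|.$$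
   Context: $\mathrm{span}_i(T)=\{e\in E:\mathrm{rank}_{\mathcal{M}_i}(T\cup\{e\})=\mathrm{rank}_{\mathcal{M}_i}(T)\}$. For a matroid $\mathcal{M}$ and independent set $X$, the contraction $\mathcal{M}/X$ has as independent sets those $A$ with $A\cap X=\emptyset$ and $A\cup X$ independent in $\mathcal{M}$. $\mathrm{Greedy}(\mathcal{N}_1,\dots,\mathcal{N}_k,\tilde E)$ processes the elements of $\tilde E$ in the given order starting from the empty set and adds an element whenever the current set together with it is independent in every $\mathcal{N}_j$; it returns the resulting set. *)

theory Defs
  imports "HOL-Probability.Probability"
begin

definition matroid :: "'a set \<Rightarrow> ('a set \<Rightarrow> bool) \<Rightarrow> bool" where
  "matroid E indep \<longleftrightarrow>
     finite E \<and>
     indep {} \<and>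
     (\<forall>X. indep X \<longrightarrow> X \<subseteq> E) \<and>
     (\<forall>X Y. indep X \<and> Y \<subseteq> X \<longrightarrow> indep Y) \<and>
     (\<forall>X Y. indep X \<and> indep Y \<and> card X < card Y \<longrightarrow> (\<exists>e \<in> Y - X. indep (insert e X)))"

definition mrank :: "('a set \<Rightarrow> bool) \<Rightarrow> 'a set \<Rightarrow> nat" where
  "mrank indep X = Max {card Y | Y. Y \<subseteq> X \<and> indep Y}"

definition mspan :: "'a set \<Rightarrow> ('a set \<Rightarrow> bool) \<Rightarrow> 'a set \<Rightarrow> 'a set" where
  "mspan E indep T = {e \<in> E. mrank indep (insert e T) = mrank indep T}"

definition contract :: "('a set \<Rightarrow> bool) \<Rightarrow> 'a set \<Rightarrow> 'a set \<Rightarrow> bool" where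
  "contract indep X = (\<lambda>A. A \<inter> X = {} \<and> indep (A \<union> X))"

definition greedy :: "('a set \<Rightarrow> bool) list \<Rightarrow> 'a list \<Rightarrow> 'a set" where
  "greedy Ns xs = foldl (\<lambda>A e. if (\<forall>N \<in> set Ns. N (insert e A)) then insert e A else A) {} xs"

end

theory Submission
  imports Defs
begin


definition cl :: "('a set \<Rightarrow> bool) \<Rightarrow> 'a set \<Rightarrow> 'a set" where
  "cl I X = {x. x \<in> X \<or> \<not> I (insert x X)}"

lemma matroid_sub: "matroid E I \<Longrightarrow> I X \<Longrightarrow> Y \<subseteq> X \<Longrightarrow> I Y"
  unfolding matroid_def by blast

lemma matroid_fin: "matroid E I \<Longrightarrow> I X \<Longrightarrow> finite X"
  unfolding matroid_def by (meson finite_subset)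

lemma matroid_aug: "matroid E I \<Longrightarrow> I X \<Longrightarrow> I Y \<Longrightarrow> card X < card Y \<Longrightarrow> \<exists>e\<in>Y - X. I (insert e X)"
  unfolding matroid_def by blast

lemma card_cl:
  assumes m: "matroid E I" and X: "I X" and J: "I J" and sub: "J \<subseteq> cl I X"
  shows "card J \<le> card X"
proof (rule ccontr)
  assume "\<not> card J \<le> card X"
  then obtain e where "e \<in> J - X" "I (insert e X)" using matroid_aug[OF m X J] by force
  thus False using sub unfolding cl_def by auto
qed

lemma cl_inter:
  assumes m: "matroid E I" and B: "I B" and A1: "A1 \<subseteq> B" and A2: "A2 \<subseteq> B"
    and x1: "x \<in> cl I A1" and x2: "x \<in> cl I A2"
  shows "x \<in> cl I (A1 \<inter> A2)"
proof (rule ccontr)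
  assume nx: "x \<notin> cl I (A1 \<inter> A2)"
  hence xn: "x \<notin> A1 \<inter> A2" and Ix: "I (insert x (A1 \<inter> A2))" unfolding cl_def by auto
  show False
  proof (cases "x \<in> B")
    case True
    have "I (insert x A1)" using matroid_sub[OF m B] A1 True by auto
    hence "x \<in> A1" using x1 unfolding cl_def by auto
    moreover have "I (insert x A2)" using matroid_sub[OF m B] A2 True by auto
    hence "x \<in> A2" using x2 unfolding cl_def by auto
    ultimately show False using xn by auto
  next
    case False
    hence xA1: "x \<notin> A1" and xA2: "x \<notin> A2" using A1 A2 by auto
    define U where "U = A1 \<union> A2"
    have IU: "I U" unfolding U_def using matroid_sub[OF m B] A1 A2 by auto
    have fU: "finite U" using matroid_fin[OF m IU] .
    define K where "K = {K. insert x (A1 \<inter> A2) \<subseteq> K \<and> K \<subseteq> insert x U \<and> I K}"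
    have fK: "finite K" unfolding K_def
      by (rule finite_subset[of _ "Pow (insert x U)"]) (use fU in auto)
    have "insert x (A1 \<inter> A2) \<in> K" unfolding K_def U_def using Ix by auto
    then obtain K0 where K0: "K0 \<in> K" and mx: "\<forall>b\<in>K. K0 \<le> b \<longrightarrow> K0 = b"
      using finite_has_maximal[OF fK] by blast
    have IK0: "I K0" and K0s: "K0 \<subseteq> insert x U" and K0i: "insert x (A1 \<inter> A2) \<subseteq> K0"
      using K0 unfolding K_def by auto
    have cge: "card U \<le> card K0"
    proof (rule ccontr)
      assume "\<not> card U \<le> card K0"
      then obtain e where e: "e \<in> U - K0" "I (insert e K0)" using matroid_aug[OF m IK0 IU] by force
      have "insert e K0 \<in> K" unfolding K_def using e K0s K0i by auto
      hence "K0 = insert e K0" using mx by auto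
      thus False using e by auto
    qed
    have "\<not> A1 \<subseteq> K0"
    proof
      assume "A1 \<subseteq> K0"
      hence "I (insert x A1)" using matroid_sub[OF m IK0] K0i by auto
      thus False using x1 xA1 unfolding cl_def by auto
    qed
    then obtain a where a: "a \<in> A1" "a \<notin> K0" by auto
    have "\<not> A2 \<subseteq> K0"
    proof
      assume "A2 \<subseteq> K0"
      hence "I (insert x A2)" using matroid_sub[OF m IK0] K0i by auto
      thus False using x2 xA2 unfolding cl_def by auto
    qed
    then obtain b where b: "b \<in> A2" "b \<notin> K0" by auto
    have ab: "a \<noteq> b" using a b K0i by auto
    have "K0 \<subseteq> insert x (U - {a, b})" using K0s a b by auto
    hence "card K0 \<le> card (insert x (U - {a, b}))" by (intro card_mono) (use fU in auto)
    also have "\<dots> \<le> Suc (card (U - {a,b}))" using fU by (simp add: card_insert_if)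
    also have "card (U - {a,b}) = card U - 2" using a b ab fU unfolding U_def
      by (subst card_Diff_subset) auto
    finally have c1: "card K0 \<le> Suc (card U - 2)" .
    have "card {a,b} \<le> card U" using a b fU unfolding U_def by (intro card_mono) auto
    hence "2 \<le> card U" using ab by simp
    thus False using c1 cge by linarith
  qed
qed
lemma cl_inter_gen:
  assumes m: "matroid E I" and B: "I B" and fD: "finite D" and D: "D \<subseteq> B"
    and xB: "x \<in> cl I B" and xt: "\<forall>t\<in>D. x \<in> cl I (B - {t})"
  shows "x \<in> cl I (B - D)"
  using fD D xt
proof (induction D rule: finite_induct)
  case empty thus ?case using xB by simp
next
  case (insert d D)
  have "x \<in> cl I ((B - D) \<inter> (B - {d}))"
    by (rule cl_inter[OF m B]) (use insert in auto)
  moreover have "(B - D) \<inter> (B - {d}) = B - insert d D" by auto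
  ultimately show ?case by simp
qed

definition stepf :: "('a set \<Rightarrow> bool) \<Rightarrow> ('a set \<Rightarrow> bool) \<Rightarrow> 'a set \<Rightarrow> 'a set \<Rightarrow> 'a \<Rightarrow> 'a set" where
  "stepf F I S = (\<lambda>A e. if F (insert e A) \<and> contract I S (insert e A) then insert e A else A)"

lemma fold_mono: "A \<subseteq> foldl (stepf F I S) A xs"
proof (induction xs arbitrary: A)
  case Nil thus ?case by simp
next
  case (Cons y ys)
  have "A \<subseteq> stepf F I S A y" unfolding stepf_def by auto
  thus ?case using Cons[of "stepf F I S A y"] by auto
qed

lemma fold_inv:
  assumes "F A \<and> contract I S A"
  shows "F (foldl (stepf F I S) A xs) \<and> contract I S (foldl (stepf F I S) A xs)"
  using assms
proof (induction xs arbitrary: A)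
  case Nil thus ?case by simp
next
  case (Cons y ys)
  have "F (stepf F I S A y) \<and> contract I S (stepf F I S A y)" using Cons.prems unfolding stepf_def by auto
  thus ?case using Cons.IH by simp
qed

lemma contract_down: "matroid E I \<Longrightarrow> contract I S X \<Longrightarrow> Y \<subseteq> X \<Longrightarrow> contract I S Y"
  unfolding contract_def using matroid_sub[of E I "X \<union> S" "Y \<union> S"] by auto

lemma fold_max:
  assumes m: "matroid E I" and dF: "\<forall>X Y. F X \<and> Y \<subseteq> X \<longrightarrow> F Y"
    and x: "x \<in> set xs" and nx: "x \<notin> foldl (stepf F I S) A xs"
  shows "\<not> (F (insert x (foldl (stepf F I S) A xs)) \<and> contract I S (insert x (foldl (stepf F I S) A xs)))"
  using x nx
proof (induction xs arbitrary: A)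
  case Nil thus ?case by simp
next
  case (Cons y ys)
  let ?R = "foldl (stepf F I S) A (y # ys)"
  show ?case
  proof (cases "x = y")
    case True
    have sub: "stepf F I S A y \<subseteq> ?R" using fold_mono[of "stepf F I S A y" F I S ys] by simp
    have "x \<notin> stepf F I S A y" using Cons.prems sub by auto
    hence rej: "\<not> (F (insert x A) \<and> contract I S (insert x A))" and "stepf F I S A y = A"
      using True unfolding stepf_def by (auto split: if_splits)
    hence "insert x A \<subseteq> insert x ?R" using sub by auto
    thus ?thesis using rej dF contract_down[OF m] by blast
  next
    case False
    thus ?thesis using Cons by simp
  qed
qed

lemma fold_same:
  assumes m: "matroid E I"
    and t: "t \<notin> cl I (foldl (stepf F I S) A xs \<union> S)"
  shows "foldl (stepf F I (insert t S)) A xs = foldl (stepf F I S) A xs"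
  using t
proof (induction xs arbitrary: A)
  case Nil thus ?case by simp
next
  case (Cons y ys)
  let ?A' = "stepf F I S A y"
  have sub: "?A' \<subseteq> foldl (stepf F I S) ?A' ys" by (rule fold_mono)
  have tR: "t \<notin> foldl (stepf F I S) ?A' ys \<union> S" "I (insert t (foldl (stepf F I S) ?A' ys \<union> S))"
    using Cons.prems unfolding cl_def by auto
  have eq: "stepf F I (insert t S) A y = ?A'"
  proof (cases "F (insert y A) \<and> contract I S (insert y A)")
    case True
    hence "?A' = insert y A" unfolding stepf_def by simp
    hence "insert y A \<subseteq> foldl (stepf F I S) ?A' ys" using sub by simp
    hence "contract I (insert t S) (insert y A)"
      using True tR matroid_sub[OF m tR(2), of "insert y A \<union> insert t S"] unfolding contract_def by auto
    thus ?thesis using True unfolding stepf_def by auto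
  next
    case False
    have "\<not> contract I (insert t S) (insert y A) \<or> \<not> F (insert y A)"
      using False matroid_sub[OF m, of "insert y A \<union> insert t S" "insert y A \<union> S"] unfolding contract_def by auto
    thus ?thesis using False unfolding stepf_def by auto
  qed
  show ?case using Cons.IH[of ?A'] Cons.prems eq by simp
qed


definition Gr :: "('a set \<Rightarrow> bool) \<Rightarrow> ('a set \<Rightarrow> bool) \<Rightarrow> 'a set \<Rightarrow> 'a list \<Rightarrow> 'a set" where
  "Gr F I S xs = foldl (stepf F I S) {} xs"

lemma Gr_inv:
  assumes m: "matroid E I" and F0: "F {}" and IS: "I S"
  shows "F (Gr F I S xs) \<and> Gr F I S xs \<inter> S = {} \<and> I (Gr F I S xs \<union> S)"
proof -
  have "F {} \<and> contract I S {}" using F0 IS unfolding contract_def by simp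
  from fold_inv[of F "{}" I S xs, OF this] show ?thesis unfolding Gr_def contract_def by blast
qed

lemma Gr_max:
  assumes m: "matroid E I" and dF: "\<forall>X Y. F X \<and> Y \<subseteq> X \<longrightarrow> F Y"
    and x: "x \<in> set xs" and nx: "x \<notin> Gr F I S xs" and Fx: "F (insert x (Gr F I S xs))"
    and F0: "F {}" and IS: "I S"
  shows "x \<in> cl I (Gr F I S xs \<union> S)"
proof -
  have inv: "Gr F I S xs \<inter> S = {}" using Gr_inv[of E I F S xs, OF m F0 IS] by auto
  have "\<not> contract I S (insert x (Gr F I S xs))"
    using fold_max[where F=F and I=I and A="{}" and S=S, OF m dF x] nx Fx unfolding Gr_def by blast
  thus ?thesis using inv unfolding contract_def cl_def by auto
qed

lemma claimA:
  assumes m: "matroid E I" and IT: "I T" and IIt: "I It"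
    and dF: "\<forall>X Y. F X \<and> Y \<subseteq> X \<longrightarrow> F Y" and F0: "F {}"
    and Its: "It \<subseteq> set xs" and S: "S \<subseteq> T"
  shows "card {x\<in>It. x \<notin> Gr F I S xs \<and> F (insert x (Gr F I S xs))}
         \<le> card (Gr F I S xs) + card {t\<in>S. t \<in> cl I (Gr F I (S - {t}) xs \<union> (S - {t}))}"
proof -
  define G where "G = Gr F I S xs"
  define Q where "Q = {t\<in>S. t \<in> cl I (Gr F I (S - {t}) xs \<union> (S - {t}))}"
  define W where "W = {x\<in>It. x \<notin> G \<and> F (insert x G)}"
  have IS: "I S" using matroid_sub[OF m IT S] .
  have inv: "F G" "G \<inter> S = {}" "I (G \<union> S)" using Gr_inv[of E I F S xs, OF m F0 IS] unfolding G_def by auto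
  have fS: "finite S" using matroid_fin[OF m IS] .
  have fG: "finite G" using matroid_fin[OF m inv(3)] by simp
  have same: "Gr F I (S - {t}) xs = G" if t: "t \<in> S - Q" for t
  proof -
    have "t \<notin> cl I (foldl (stepf F I (S - {t})) {} xs \<union> (S - {t}))"
      using t unfolding Q_def Gr_def by auto
    from fold_same[OF m this] have "foldl (stepf F I (insert t (S - {t}))) {} xs = foldl (stepf F I (S - {t})) {} xs" .
    moreover have "insert t (S - {t}) = S" using t by auto
    ultimately show ?thesis unfolding G_def Gr_def by simp
  qed
  have Wcl: "W \<subseteq> cl I (G \<union> Q)"
  proof
    fix x assume x: "x \<in> W"
    hence xI: "x \<in> It" and xG: "x \<notin> G" and Fx: "F (insert x G)" unfolding W_def by auto
    have xs: "x \<in> set xs" using xI Its by auto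
    have c0: "x \<in> cl I (G \<union> S)" using Gr_max[where F=F and I=I and S=S, OF m dF xs] xG Fx F0 IS unfolding G_def by blast
    have ct: "\<forall>t\<in>S - Q. x \<in> cl I (G \<union> S - {t})"
    proof
      fix t assume t: "t \<in> S - Q"
      have "x \<in> cl I (Gr F I (S - {t}) xs \<union> (S - {t}))"
        using Gr_max[where F=F and I=I and S="S - {t}", OF m dF xs] same[OF t] xG Fx F0 matroid_sub[OF m IS, of "S - {t}"] by auto
      moreover have "G \<union> S - {t} = G \<union> (S - {t})" using t inv(2) by auto
      ultimately show "x \<in> cl I (G \<union> S - {t})" using same[OF t] by simp
    qed
    have "x \<in> cl I (G \<union> S - (S - Q))"
      by (rule cl_inter_gen[OF m inv(3)]) (use fS c0 ct in auto)
    moreover have "G \<union> S - (S - Q) = G \<union> Q" using inv(2) unfolding Q_def by auto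
    ultimately show "x \<in> cl I (G \<union> Q)" by simp
  qed
  have IW: "I W" using matroid_sub[OF m IIt] unfolding W_def by auto
  have IGQ: "I (G \<union> Q)" by (rule matroid_sub[OF m inv(3)]) (auto simp: Q_def)
  have "card W \<le> card (G \<union> Q)" by (rule card_cl[OF m IGQ IW Wcl])
  also have "\<dots> \<le> card G + card Q" by (rule card_Un_le)
  finally show ?thesis unfolding W_def G_def Q_def .
qed

lemma claimB:
  assumes m: "matroid E I" and IT: "I T" and F0: "F {}" and S: "S \<subseteq> T"
  shows "card {t\<in>T - S. t \<in> cl I (Gr F I S xs \<union> S)} \<le> card (Gr F I S xs)"
proof -
  define G where "G = Gr F I S xs"
  define C where "C = {t\<in>T - S. t \<in> cl I (G \<union> S)}"
  have IS: "I S" using matroid_sub[OF m IT S] .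
  have inv: "F G" "G \<inter> S = {}" "I (G \<union> S)" using Gr_inv[of E I F S xs, OF m F0 IS] unfolding G_def by auto
  have fS: "finite S" using matroid_fin[OF m IS] .
  have fG: "finite G" using matroid_fin[OF m inv(3)] by simp
  have fT: "finite T" using matroid_fin[OF m IT] .
  have IJ: "I (S \<union> C)" using matroid_sub[OF m IT] S unfolding C_def by auto
  have "S \<union> C \<subseteq> cl I (G \<union> S)" unfolding C_def cl_def by auto
  from card_cl[OF m inv(3) IJ this] have "card (S \<union> C) \<le> card (G \<union> S)" .
  moreover have "card (S \<union> C) = card S + card C"
    by (rule card_Un_disjoint) (use fS fT in \<open>auto simp: C_def\<close>)
  moreover have "card (G \<union> S) = card G + card S"
    by (rule card_Un_disjoint) (use fS fG inv(2) in auto)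
  ultimately show ?thesis unfolding C_def G_def by simp
qed



definition wt :: "'a set \<Rightarrow> real \<Rightarrow> 'a set \<Rightarrow> real" where
  "wt T p S = (\<Prod>x\<in>T. if x \<in> S then 1 - p else p)"

lemma E_sum:
  assumes fT: "finite T" and p: "0 \<le> p" "p \<le> 1"
  shows "measure_pmf.expectation (Pi_pmf T False (\<lambda>_. bernoulli_pmf (1 - p))) f
         = (\<Sum>S\<in>Pow T. f (\<lambda>x. x \<in> S) * wt T p S)"
proof -
  let ?P = "Pi_pmf T False (\<lambda>_. bernoulli_pmf (1 - p))"
  let ?A = "(\<lambda>S x. x \<in> S) ` Pow T"
  have "measure_pmf.expectation ?P f = (\<Sum>a\<in>?A. f a * pmf ?P a)"
  proof (rule integral_measure_pmf_real)
    show "finite ?A" using fT by simp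
    fix a assume "a \<in> set_pmf ?P"
    hence "\<forall>x. x \<notin> T \<longrightarrow> a x = False" using set_Pi_pmf_subset[OF fT, of False "\<lambda>_. bernoulli_pmf (1 - p)"] by blast
    hence "a = (\<lambda>x. x \<in> {e\<in>T. a e})" by auto
    moreover have "{e\<in>T. a e} \<in> Pow T" by auto
    ultimately show "a \<in> ?A" by (rule image_eqI)
  qed
  also have "\<dots> = (\<Sum>S\<in>Pow T. f (\<lambda>x. x \<in> S) * pmf ?P (\<lambda>x. x \<in> S))"
  proof (rule sum.reindex[unfolded comp_def])
    show "inj_on (\<lambda>S x. x \<in> S) (Pow T)"
      proof (rule inj_onI)
      fix S S' assume "(\<lambda>x. x \<in> S) = (\<lambda>x. x \<in> S')"
      thus "S = S'" by (simp add: fun_eq_iff set_eq_iff)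
    qed
  qed
  also have "\<dots> = (\<Sum>S\<in>Pow T. f (\<lambda>x. x \<in> S) * wt T p S)"
  proof (rule sum.cong[OF refl])
    fix S assume S: "S \<in> Pow T"
    have "pmf ?P (\<lambda>x. x \<in> S) = (\<Prod>x\<in>T. pmf (bernoulli_pmf (1 - p)) (x \<in> S))"
      using S by (subst pmf_Pi[OF fT]) auto
    also have "\<dots> = wt T p S" unfolding wt_def
      by (rule prod.cong[OF refl]) (use p in auto)
    finally show "f (\<lambda>x. x \<in> S) * pmf ?P (\<lambda>x. x \<in> S) = f (\<lambda>x. x \<in> S) * wt T p S" by simp
  qed
  finally show ?thesis .
qed

lemma sum_Pow_split:
  fixes h :: "'a set \<Rightarrow> real"
  assumes fT: "finite T" and t: "t \<in> T"
  shows "(\<Sum>S\<in>Pow T. h S) = (\<Sum>S\<in>Pow (T - {t}). h S + h (insert t S))"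
proof -
  have T: "T = insert t (T - {t})" using t by auto
  have "(\<Sum>S\<in>Pow T. h S) = (\<Sum>S\<in>Pow (T - {t}) \<union> insert t ` Pow (T - {t}). h S)"
    by (subst T) (simp only: Pow_insert)
  also have "\<dots> = (\<Sum>S\<in>Pow (T - {t}). h S) + (\<Sum>S\<in>insert t ` Pow (T - {t}). h S)"
    by (rule sum.union_disjoint) (use fT in auto)
  also have "(\<Sum>S\<in>insert t ` Pow (T - {t}). h S) = (\<Sum>S\<in>Pow (T - {t}). h (insert t S))"
  proof (rule sum.reindex[unfolded comp_def])
    show "inj_on (insert t) (Pow (T - {t}))"
      proof (rule inj_onI)
      fix S S' assume "S \<in> Pow (T - {t})" "S' \<in> Pow (T - {t})" "insert t S = insert t S'"
      thus "S = S'" by (metis Diff_insert_absorb PowD subset_Diff_insert)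
    qed
  qed
  finally show ?thesis by (simp add: sum.distrib)
qed

lemma wt_split:
  assumes fT: "finite T" and t: "t \<in> T" and S: "S \<subseteq> T - {t}"
  shows "wt T p S = p * wt (T - {t}) p S" "wt T p (insert t S) = (1 - p) * wt (T - {t}) p S"
proof -
  show "wt T p S = p * wt (T - {t}) p S" unfolding wt_def
    using S by (subst prod.remove[OF fT t]) auto
  have "wt T p (insert t S) = (1 - p) * (\<Prod>x\<in>T - {t}. if x \<in> insert t S then 1 - p else p)"
    unfolding wt_def by (subst prod.remove[OF fT t]) auto
  also have "(\<Prod>x\<in>T - {t}. if x \<in> insert t S then 1 - p else p) = wt (T - {t}) p S"
    unfolding wt_def by (rule prod.cong) auto
  finally show "wt T p (insert t S) = (1 - p) * wt (T - {t}) p S" .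
qed

lemma swap_t:
  fixes q :: "'a \<Rightarrow> 'a set \<Rightarrow> bool"
  assumes fT: "finite T" and t: "t \<in> T"
  shows "p * (\<Sum>S\<in>Pow T. wt T p S * (if t \<in> S \<and> q t (S - {t}) then 1 else 0))
       = (1 - p) * (\<Sum>S\<in>Pow T. wt T p S * (if t \<notin> S \<and> q t S then 1 else 0))"
proof -
  have "(\<Sum>S\<in>Pow T. wt T p S * (if t \<in> S \<and> q t (S - {t}) then 1 else 0))
      = (\<Sum>S\<in>Pow (T - {t}). wt T p (insert t S) * (if q t S then 1 else 0))"
  proof (subst sum_Pow_split[OF fT t], rule sum.cong[OF refl])
    fix S assume "S \<in> Pow (T - {t})"
    hence "t \<notin> S" "insert t S - {t} = S" by auto
    thus "wt T p S * (if t \<in> S \<and> q t (S - {t}) then 1 else 0) +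
         wt T p (insert t S) * (if t \<in> insert t S \<and> q t (insert t S - {t}) then 1 else 0) =
         wt T p (insert t S) * (if q t S then 1 else 0)" by simp
  qed
  also have "\<dots> = (\<Sum>S\<in>Pow (T - {t}). (1 - p) * wt (T - {t}) p S * (if q t S then 1 else 0))"
    by (rule sum.cong[OF refl]) (use wt_split[OF fT t] in auto)
  finally have L: "(\<Sum>S\<in>Pow T. wt T p S * (if t \<in> S \<and> q t (S - {t}) then 1 else 0))
      = (\<Sum>S\<in>Pow (T - {t}). (1 - p) * wt (T - {t}) p S * (if q t S then 1 else 0))" .
  have "(\<Sum>S\<in>Pow T. wt T p S * (if t \<notin> S \<and> q t S then 1 else 0))
      = (\<Sum>S\<in>Pow (T - {t}). wt T p S * (if q t S then 1 else 0))"
    apply (subst sum_Pow_split[OF fT t])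
    apply (rule sum.cong[OF refl])
    apply auto
    done
  also have "\<dots> = (\<Sum>S\<in>Pow (T - {t}). p * wt (T - {t}) p S * (if q t S then 1 else 0))"
    by (rule sum.cong[OF refl]) (use wt_split[OF fT t] in auto)
  finally have R: "(\<Sum>S\<in>Pow T. wt T p S * (if t \<notin> S \<and> q t S then 1 else 0))
      = (\<Sum>S\<in>Pow (T - {t}). p * wt (T - {t}) p S * (if q t S then 1 else 0))" .
  show ?thesis unfolding L R sum_distrib_left by (rule sum.cong[OF refl]) (simp add: algebra_simps)
qed

lemma card_ind:
  assumes fT: "finite T" and S: "S \<subseteq> T"
  shows "real (card {t\<in>S. P t}) = (\<Sum>t\<in>T. if t \<in> S \<and> P t then 1 else 0)"
proof -
  have "{t\<in>S. P t} = {t\<in>T. t \<in> S \<and> P t}" using S by auto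
  hence "real (card {t\<in>S. P t}) = (\<Sum>t\<in>{t\<in>T. t \<in> S \<and> P t}. 1)" by simp
  also have "\<dots> = (\<Sum>t\<in>T. if t \<in> S \<and> P t then 1 else 0)" by (rule sum.inter_filter[OF fT])
  finally show ?thesis .
qed

lemma swap_all:
  fixes q :: "'a \<Rightarrow> 'a set \<Rightarrow> bool"
  assumes fT: "finite T"
  shows "p * (\<Sum>S\<in>Pow T. wt T p S * real (card {t\<in>S. q t (S - {t})}))
       = (1 - p) * (\<Sum>S\<in>Pow T. wt T p S * real (card {t\<in>T - S. q t S}))"
proof -
  have "(\<Sum>S\<in>Pow T. wt T p S * real (card {t\<in>S. q t (S - {t})}))
      = (\<Sum>S\<in>Pow T. \<Sum>t\<in>T. wt T p S * (if t \<in> S \<and> q t (S - {t}) then 1 else 0))"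
    by (rule sum.cong[OF refl]) (simp add: card_ind[OF fT] sum_distrib_left)
  also have "\<dots> = (\<Sum>t\<in>T. \<Sum>S\<in>Pow T. wt T p S * (if t \<in> S \<and> q t (S - {t}) then 1 else 0))"
    by (rule sum.swap)
  finally have L: "(\<Sum>S\<in>Pow T. wt T p S * real (card {t\<in>S. q t (S - {t})}))
      = (\<Sum>t\<in>T. \<Sum>S\<in>Pow T. wt T p S * (if t \<in> S \<and> q t (S - {t}) then 1 else 0))" .
  have "(\<Sum>S\<in>Pow T. wt T p S * real (card {t\<in>T - S. q t S}))
      = (\<Sum>S\<in>Pow T. \<Sum>t\<in>T. wt T p S * (if t \<notin> S \<and> q t S then 1 else 0))"
  proof (rule sum.cong[OF refl])
    fix S assume "S \<in> Pow T"
    have "real (card {t\<in>T - S. q t S}) = (\<Sum>t\<in>T. if t \<in> T - S \<and> q t S then 1 else 0)"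
      by (rule card_ind[OF fT]) auto
    thus "wt T p S * real (card {t\<in>T - S. q t S}) = (\<Sum>t\<in>T. wt T p S * (if t \<notin> S \<and> q t S then 1 else 0))"
      by (simp add: sum_distrib_left)
  qed
  also have "\<dots> = (\<Sum>t\<in>T. \<Sum>S\<in>Pow T. wt T p S * (if t \<notin> S \<and> q t S then 1 else 0))"
    by (rule sum.swap)
  finally have R: "(\<Sum>S\<in>Pow T. wt T p S * real (card {t\<in>T - S. q t S}))
      = (\<Sum>t\<in>T. \<Sum>S\<in>Pow T. wt T p S * (if t \<notin> S \<and> q t S then 1 else 0))" .
  have "(\<Sum>t\<in>T. p * (\<Sum>S\<in>Pow T. wt T p S * (if t \<in> S \<and> q t (S - {t}) then 1 else 0)))
      = (\<Sum>t\<in>T. (1 - p) * (\<Sum>S\<in>Pow T. wt T p S * (if t \<notin> S \<and> q t S then 1 else 0)))"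
    by (intro sum.cong refl swap_t[OF fT])
  thus ?thesis unfolding L R sum_distrib_left[symmetric] .
qed



lemma greedy_eq:
  assumes "i < k"
  shows "greedy (map (\<lambda>j. if j = i then contract (M j) S else contract (M j) T) [0..<k]) xs
       = Gr (\<lambda>X. \<forall>j<k. j \<noteq> i \<longrightarrow> contract (M j) T X) (M i) S xs"
proof -
  have "\<And>X. (\<forall>N\<in>set (map (\<lambda>j. if j = i then contract (M j) S else contract (M j) T) [0..<k]). N X)
     \<longleftrightarrow> (\<forall>j<k. j \<noteq> i \<longrightarrow> contract (M j) T X) \<and> contract (M i) S X"
    using assms by auto
  thus ?thesis unfolding greedy_def Gr_def stepf_def by simp
qed

lemma detD:
  fixes M :: "nat \<Rightarrow> 'a set \<Rightarrow> bool"
  assumes k: "k \<ge> 2" and m: "\<And>j. j < k \<Longrightarrow> matroid E (M j)"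
    and MT: "\<And>j. j < k \<Longrightarrow> M j T" and i: "i < k"
    and Its: "It \<subseteq> set xs" and MIt: "M i It"
    and cIt: "\<And>j. j < k \<Longrightarrow> j \<noteq> i \<Longrightarrow> contract (M j) T It"
    and S: "S \<subseteq> T"
  defines "F \<equiv> (\<lambda>X. \<forall>j<k. j \<noteq> i \<longrightarrow> contract (M j) T X)"
  shows "card It \<le> (k - 1) * card (Gr F (M i) S xs)
     + card {x\<in>It. x \<notin> Gr F (M i) S xs \<and> F (insert x (Gr F (M i) S xs))}"
proof -
  define G where "G = Gr F (M i) S xs"
  define W where "W = {x\<in>It. x \<notin> G \<and> F (insert x G)}"
  define J where "J = {0..<k} - {i}"
  define Y where "Y = (\<lambda>j. {x\<in>It. x \<in> G \<or> \<not> contract (M j) T (insert x G)})"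
  have F0: "F {}" unfolding F_def contract_def using MT by auto
  have IS: "M i S" using matroid_sub[OF m[OF i] MT[OF i] S] .
  have FG: "F G" using Gr_inv[of E "M i" F S xs, OF m[OF i] F0 IS] unfolding G_def by auto
  obtain j0 where j0: "j0 < k" "j0 \<noteq> i" proof -
    have "(if i = 0 then 1 else 0) < k \<and> (if i = 0 then 1 else 0) \<noteq> i" using k by auto
    thus ?thesis using that by blast
  qed
  have ItT: "It \<inter> T = {}" using cIt[OF j0] unfolding contract_def by auto
  have fIt: "finite It" using matroid_fin[OF m[OF i] MIt] .
  have cov: "It \<subseteq> (\<Union>j\<in>J. Y j) \<union> W"
  proof
    fix x assume x: "x \<in> It"
    show "x \<in> (\<Union>j\<in>J. Y j) \<union> W"
    proof (cases "\<exists>j\<in>J. x \<in> Y j")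
      case True thus ?thesis by auto
    next
      case False
      hence "x \<notin> G" and "F (insert x G)" using x j0 unfolding Y_def J_def F_def by auto
      thus ?thesis using x unfolding W_def by auto
    qed
  qed
  have cY: "card (Y j) \<le> card G" if j: "j \<in> J" for j
  proof -
    have jk: "j < k" "j \<noteq> i" using j unfolding J_def by auto
    note mj = m[OF jk(1)]
    have cG: "contract (M j) T G" using FG jk unfolding F_def by auto
    hence GT: "G \<inter> T = {}" "M j (G \<union> T)" unfolding contract_def by auto
    have IY: "M j (Y j \<union> T)"
      using matroid_sub[OF mj, of "It \<union> T" "Y j \<union> T"] cIt[OF jk] unfolding contract_def Y_def by auto
    have "Y j \<union> T \<subseteq> cl (M j) (G \<union> T)"
    proof
      fix x assume x: "x \<in> Y j \<union> T"
      show "x \<in> cl (M j) (G \<union> T)"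
      proof (cases "x \<in> T \<or> x \<in> G")
        case True thus ?thesis unfolding cl_def by auto
      next
        case False
        hence "x \<in> It" "\<not> contract (M j) T (insert x G)" using x unfolding Y_def by auto
        hence "\<not> M j (insert x (G \<union> T))" using GT False unfolding contract_def by auto
        thus ?thesis unfolding cl_def by auto
      qed
    qed
    from card_cl[OF mj GT(2) IY this] have c: "card (Y j \<union> T) \<le> card (G \<union> T)" .
    have fT: "finite T" using matroid_fin[OF mj MT[OF jk(1)]] .
    have fG: "finite G" using matroid_fin[OF mj GT(2)] by simp
    have "card (Y j \<union> T) = card (Y j) + card T"
      by (rule card_Un_disjoint) (use fIt fT ItT in \<open>auto simp: Y_def\<close>)
    moreover have "card (G \<union> T) = card G + card T"
      by (rule card_Un_disjoint) (use fG fT GT in auto)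
    ultimately show ?thesis using c by simp
  qed
  have fJ: "finite J" unfolding J_def by simp
  have cJ: "card J = k - 1" unfolding J_def using i by simp
  have "card It \<le> card ((\<Union>j\<in>J. Y j) \<union> W)"
    by (rule card_mono[OF _ cov]) (rule finite_subset[OF _ fIt], auto simp: Y_def W_def)
  also have "\<dots> \<le> card (\<Union>j\<in>J. Y j) + card W" by (rule card_Un_le)
  also have "card (\<Union>j\<in>J. Y j) \<le> (\<Sum>j\<in>J. card (Y j))" by (rule card_UN_le[OF fJ])
  also have "\<dots> \<le> (\<Sum>j\<in>J. card G)" by (rule sum_mono) (rule cY)
  also have "\<dots> = (k - 1) * card G" using cJ by simp
  finally show ?thesis unfolding G_def W_def by simp
qed



theorem lemma15:
  fixes E :: "'a set" and M :: "nat \<Rightarrow> 'a set \<Rightarrow> bool" and k i :: nat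
    and T Et It :: "'a set" and order :: "'a list" and p :: real
  assumes "k \<ge> 2"
    and "\<And>j. j < k \<Longrightarrow> matroid E (M j)"
    and "\<And>j. j < k \<Longrightarrow> M j T"
    and "0 < p" and "p < 1"
    and "i < k"
    and "Et \<subseteq> mspan E (M i) T"
    and "It \<subseteq> Et"
    and "M i It"
    and "\<And>j. j < k \<Longrightarrow> j \<noteq> i \<Longrightarrow> contract (M j) T It"
    and "distinct order" and "set order = Et"
  shows "measure_pmf.expectation (Pi_pmf T False (\<lambda>_. bernoulli_pmf (1 - p)))
           (\<lambda>\<Psi>. real (card (greedy
              (map (\<lambda>j. if j = i then contract (M j) {e \<in> T. \<Psi> e} else contract (M j) T) [0..<k])
              order)))
         \<ge> p / (1 + p * (real k - 1)) * real (card It)"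
proof -
  note k = assms(1) and m = assms(2) and MT = assms(3) and p0 = assms(4) and p1 = assms(5)
    and i = assms(6) and ItEt = assms(8) and MIt = assms(9) and cIt = assms(10) and ord = assms(12)
  define F where "F \<equiv> (\<lambda>X. \<forall>j<k. j \<noteq> i \<longrightarrow> contract (M j) T X)"
  define g where "g S = real (card (Gr F (M i) S order))" for S
  define Wc where "Wc S = real (card {x\<in>It. x \<notin> Gr F (M i) S order \<and> F (insert x (Gr F (M i) S order))})" for S
  define q where "q t S = (t \<in> cl (M i) (Gr F (M i) S order \<union> S))" for t S
  define w where "w S = wt T p S" for S
  have mi: "matroid E (M i)" using m[OF i] .
  have fT: "finite T" using matroid_fin[OF mi MT[OF i]] .
  have F0: "F {}" unfolding F_def contract_def using MT by auto
  have dF: "\<forall>X Y. F X \<and> Y \<subseteq> X \<longrightarrow> F Y" unfolding F_def using contract_down m by blast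
  have Its: "It \<subseteq> set order" using ItEt ord by simp
  have w0: "w S \<ge> 0" for S unfolding w_def wt_def by (rule prod_nonneg) (use p0 p1 in auto)
  have Eeq: "measure_pmf.expectation (Pi_pmf T False (\<lambda>_. bernoulli_pmf (1 - p)))
           (\<lambda>\<Psi>. real (card (greedy
              (map (\<lambda>j. if j = i then contract (M j) {e \<in> T. \<Psi> e} else contract (M j) T) [0..<k])
              order))) = (\<Sum>S\<in>Pow T. g S * w S)"
  proof (subst E_sum[OF fT], use p0 p1 in auto, rule sum.cong[OF refl])
    fix S assume S: "S \<in> Pow T"
    hence eqS: "{e \<in> T. e \<in> S} = S" by auto
    show "real (card (greedy (map (\<lambda>j. if j = i then contract (M j) {e \<in> T. e \<in> S} else contract (M j) T) [0..<k]) order)) * wt T p S = g S * w S"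
      unfolding g_def w_def F_def eqS greedy_eq[OF i] by simp
  qed
  have sw1: "(\<Sum>S\<in>Pow T. w S) = 1"
  proof -
    have "measure_pmf.expectation (Pi_pmf T False (\<lambda>_. bernoulli_pmf (1 - p))) (\<lambda>_. 1::real) = 1" by simp
    thus ?thesis unfolding w_def using E_sum[OF fT, of p "\<lambda>_. 1"] p0 p1 by simp
  qed
  have A: "Wc S \<le> g S + real (card {t\<in>S. q t (S - {t})})" if S: "S \<in> Pow T" for S
    using claimA[where F=F and S=S, OF mi MT[OF i] MIt dF F0 Its] S unfolding Wc_def g_def q_def by simp
  have B: "real (card {t\<in>T - S. q t S}) \<le> g S" if S: "S \<in> Pow T" for S
    using claimB[where F=F and S=S and xs=order, OF mi MT[OF i] F0] S unfolding g_def q_def by simp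
  have D: "real (card It) \<le> (real k - 1) * g S + Wc S" if S: "S \<in> Pow T" for S
  proof -
    have "card It \<le> (k - 1) * card (Gr F (M i) S order)
     + card {x\<in>It. x \<notin> Gr F (M i) S order \<and> F (insert x (Gr F (M i) S order))}"
      using detD[where M=M and k=k and i=i and T=T and E=E and It=It and xs=order and S=S, OF k m MT i Its MIt cIt] S unfolding F_def by simp
    hence "real (card It) \<le> real ((k - 1) * card (Gr F (M i) S order)
     + card {x\<in>It. x \<notin> Gr F (M i) S order \<and> F (insert x (Gr F (M i) S order))})"
      by (simp only: of_nat_le_iff)
    hence "real (card It) \<le> real (k - 1) * g S + Wc S" unfolding g_def Wc_def
      by (simp only: of_nat_add of_nat_mult)
    moreover have "real (k - 1) = real k - 1" using k by simp
    ultimately show ?thesis by simp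
  qed
  define X where "X = (\<Sum>S\<in>Pow T. w S * g S)"
  define Y where "Y = (\<Sum>S\<in>Pow T. w S * Wc S)"
  define Qs where "Qs = (\<Sum>S\<in>Pow T. w S * real (card {t\<in>S. q t (S - {t})}))"
  define Cs where "Cs = (\<Sum>S\<in>Pow T. w S * real (card {t\<in>T - S. q t S}))"
  have YX: "Y \<le> X + Qs" unfolding X_def Y_def Qs_def sum.distrib[symmetric]
    by (rule sum_mono) (use A w0 in \<open>simp add: mult_left_mono flip: distrib_left\<close>)
  have CX: "Cs \<le> X" unfolding X_def Cs_def
    by (rule sum_mono) (use B w0 in \<open>simp add: mult_left_mono\<close>)
  have QC: "p * Qs = (1 - p) * Cs" unfolding Qs_def Cs_def w_def by (rule swap_all[OF fT])
  have "p * real (card It) = (\<Sum>S\<in>Pow T. w S * (p * real (card It)))"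
    using sw1 by (simp add: sum_distrib_right[symmetric])
  also have "\<dots> \<le> (\<Sum>S\<in>Pow T. w S * (p * ((real k - 1) * g S + Wc S)))"
    by (rule sum_mono) (use D w0 p0 in \<open>simp add: mult_left_mono\<close>)
  also have "\<dots> = (\<Sum>S\<in>Pow T. p * (real k - 1) * (w S * g S) + p * (w S * Wc S))"
    by (rule sum.cong[OF refl]) (simp add: algebra_simps)
  also have "\<dots> = p * (real k - 1) * X + p * Y"
    unfolding X_def Y_def sum.distrib sum_distrib_left by simp
  finally have "p * real (card It) \<le> p * (real k - 1) * X + p * Y" .
  also have "\<dots> \<le> p * (real k - 1) * X + p * X + p * Qs" using mult_left_mono[OF YX, of p] p0 by (simp add: algebra_simps)
  also have "\<dots> = p * (real k - 1) * X + p * X + (1 - p) * Cs" using QC by simp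
  also have "\<dots> \<le> p * (real k - 1) * X + p * X + (1 - p) * X"
    using CX p1 by (simp add: mult_left_mono)
  also have "\<dots> = p * (real k - 1) * X + X" by (simp add: algebra_simps)
  finally have main: "p * real (card It) \<le> (1 + p * (real k - 1)) * X" by (simp add: algebra_simps)
  have pos: "0 < 1 + p * (real k - 1)" using k p0 by (simp add: add_pos_nonneg)
  have "p / (1 + p * (real k - 1)) * real (card It) = (p * real (card It)) / (1 + p * (real k - 1))"
    by simp
  also have "\<dots> \<le> X"
    by (subst pos_divide_le_eq[OF pos]) (metis main mult.commute)
  finally have "p / (1 + p * (real k - 1)) * real (card It) \<le> X" .
  moreover have "X = (\<Sum>S\<in>Pow T. g S * w S)" unfolding X_def by (simp add: mult.commute)
  ultimately show ?thesis using Eeq by simp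
qed

end
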